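(* Let $G=G_1\vee G_2$ be the join of two cographs $G_1,G_2$ (so $G$ is a connected cograph with at least two vertices). Define $D^*=\{w\}$ if there is a vertex $w\in V(G)$ with $N[w]=V(G)$ (choose one such $w$), and otherwise $D^*=\{x,y\}$ for an arbitrary choice of $x\in V(G_1)$ and $y\in V(G_2)$. Then $D^*$ is a minimum dominating set of $G$, and for every dominating set $D$ of $G$ we have $D\leftrightarrow_{|D|+1} D^*$.
   Context: All graphs are finite, simple and undirected. The join $G_1\vee G_2$ of vertex-disjoint graphs has vertex set $V(G_1)\cup V(G_2)$ and edge set $E(G_1)\cup E(G_2)\cup\{vw: v\in V(G_1), w\in V(G_2)\}$. Cographs are defined recursively: a single vertex is a cograph, and the disjoint union and the join of two cographs are cographs. $N[w]$ denotes the closed neighbourhood of $w$. A set $D\subseteq V(G)$ is a dominating set if every vertex of $G$ is in $D$ or adjacent to a vertex of $D$. Two dominating sets $D,D'$ are adjacent if $|D\triangle D'|=1$. For dominating sets $D_p,D_q$ and an integer $k>0$, write $D_p\leftrightarrow_k D_q$ if there is a sequence $D_0=D_p,\dots,D_\ell=D_q$ ($\ell\ge0$) of dominating sets of $G$ with consecutive sets adjacent and $|D_i|\le k$ for all $i$. *)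

theory Defs
  imports Main
begin

text \<open>A finite simple undirected graph is given by a vertex set V and a set E of
  edges, each edge being a two-element set of vertices.\<close>

definition join_edges :: "'a set \<Rightarrow> 'a set set \<Rightarrow> 'a set \<Rightarrow> 'a set set \<Rightarrow> 'a set set" where
  "join_edges V1 E1 V2 E2 = E1 \<union> E2 \<union> {{v, w} | v w. v \<in> V1 \<and> w \<in> V2}"

inductive cograph :: "'a set \<Rightarrow> 'a set set \<Rightarrow> bool" where
  single: "cograph {v} {}"
| disj_union: "\<lbrakk>cograph V1 E1; cograph V2 E2; V1 \<inter> V2 = {}\<rbrakk>
      \<Longrightarrow> cograph (V1 \<union> V2) (E1 \<union> E2)"
| join: "\<lbrakk>cograph V1 E1; cograph V2 E2; V1 \<inter> V2 = {}\<rbrakk>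
      \<Longrightarrow> cograph (V1 \<union> V2) (join_edges V1 E1 V2 E2)"

definition closed_nbhd :: "'a set \<Rightarrow> 'a set set \<Rightarrow> 'a \<Rightarrow> 'a set" where
  "closed_nbhd V E w = {w} \<union> {u \<in> V. {u, w} \<in> E}"

definition dominating :: "'a set \<Rightarrow> 'a set set \<Rightarrow> 'a set \<Rightarrow> bool" where
  "dominating V E D \<longleftrightarrow> D \<subseteq> V \<and> (\<forall>v \<in> V. v \<in> D \<or> (\<exists>u \<in> D. {u, v} \<in> E))"

definition min_dominating :: "'a set \<Rightarrow> 'a set set \<Rightarrow> 'a set \<Rightarrow> bool" where
  "min_dominating V E D \<longleftrightarrow> dominating V E D \<and>
     (\<forall>D'. dominating V E D' \<longrightarrow> card D \<le> card D')"

definition ds_adjacent :: "'a set \<Rightarrow> 'a set \<Rightarrow> bool" where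
  "ds_adjacent D D' \<longleftrightarrow> card ((D - D') \<union> (D' - D)) = 1"

definition reconf :: "'a set \<Rightarrow> 'a set set \<Rightarrow> nat \<Rightarrow> 'a set \<Rightarrow> 'a set \<Rightarrow> bool" where
  "reconf V E k D D' \<longleftrightarrow> (\<exists>Ds. Ds \<noteq> [] \<and> hd Ds = D \<and> last Ds = D' \<and>
     (\<forall>X \<in> set Ds. dominating V E X \<and> card X \<le> k) \<and>
     (\<forall>i. Suc i < length Ds \<longrightarrow> ds_adjacent (Ds ! i) (Ds ! Suc i)))"

end

theory Submission
  imports Defs
begin

lemma cograph_basic: "cograph V E \<Longrightarrow> finite V \<and> V \<noteq> {}"
  by (induction rule: cograph.induct) auto

lemma reconf_refl: "dominating V E X \<Longrightarrow> card X \<le> k \<Longrightarrow> reconf V E k X X"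
  unfolding reconf_def by (rule exI[of _ "[X]"]) auto

lemma reconf_step: "dominating V E X \<Longrightarrow> card X \<le> k \<Longrightarrow> dominating V E Y \<Longrightarrow> card Y \<le> k
  \<Longrightarrow> ds_adjacent X Y \<Longrightarrow> reconf V E k X Y"
  unfolding reconf_def
  apply (rule exI[of _ "[X,Y]"])
  by auto

lemma reconf_trans:
  assumes "reconf V E k X Y" "reconf V E k Y Z"
  shows "reconf V E k X Z"
proof -
  obtain Ds1 where d1: "Ds1 \<noteq> []" "hd Ds1 = X" "last Ds1 = Y"
    "\<forall>X \<in> set Ds1. dominating V E X \<and> card X \<le> k"
    "\<forall>i. Suc i < length Ds1 \<longrightarrow> ds_adjacent (Ds1 ! i) (Ds1 ! Suc i)"
    using assms(1) unfolding reconf_def by blast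
  obtain Ds2 where d2: "Ds2 \<noteq> []" "hd Ds2 = Y" "last Ds2 = Z"
    "\<forall>X \<in> set Ds2. dominating V E X \<and> card X \<le> k"
    "\<forall>i. Suc i < length Ds2 \<longrightarrow> ds_adjacent (Ds2 ! i) (Ds2 ! Suc i)"
    using assms(2) unfolding reconf_def by blast
  define Ds where "Ds = Ds1 @ tl Ds2"
  have "Ds \<noteq> []" using d1 Ds_def by simp
  moreover have "hd Ds = X" using d1 Ds_def by simp
  moreover have "last Ds = Z"
  proof (cases "tl Ds2 = []")
    case True
    then have "Ds2 = [hd Ds2]" using d2(1) by (metis list.collapse)
    then have "Z = Y" using d2 by (metis last.simps)
    then show ?thesis using True d1 Ds_def by simp
  next
    case False
    then show ?thesis using d2 Ds_def by (simp add: last_tl)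
  qed
  moreover have "\<forall>X \<in> set Ds. dominating V E X \<and> card X \<le> k"
    using d1(4) d2(4) Ds_def by (auto dest: list.set_sel(2)[OF d2(1)])
  moreover have "\<forall>i. Suc i < length Ds \<longrightarrow> ds_adjacent (Ds ! i) (Ds ! Suc i)"
  proof (intro allI impI)
    fix i assume i: "Suc i < length Ds"
    have lenDs: "length Ds = length Ds1 + length Ds2 - 1" using Ds_def d2(1) by (cases Ds2) auto
    have tlnth: "\<And>j. j < length Ds2 - 1 \<Longrightarrow> tl Ds2 ! j = Ds2 ! Suc j"
      using d2(1) by (cases Ds2) auto
    consider "Suc i < length Ds1" | "Suc i = length Ds1" | "Suc i > length Ds1" by linarith
    then show "ds_adjacent (Ds ! i) (Ds ! Suc i)"
    proof cases
      case 1 then show ?thesis using d1(5) Ds_def by (simp add: nth_append)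
    next
      case 2
      have ii: "i = length Ds1 - 1" using 2 by simp
      have a: "Ds ! i = Ds2 ! 0"
        using 2 Ds_def d1 d2 by (simp add: nth_append last_conv_nth hd_conv_nth ii)
      have b: "Ds ! Suc i = Ds2 ! Suc 0"
        using 2 Ds_def i lenDs tlnth[of 0] by (simp add: nth_append)
      show ?thesis using a b d2(5) i lenDs 2 by simp
    next
      case 3
      have a: "Ds ! i = Ds2 ! Suc (i - length Ds1)"
        using 3 Ds_def i lenDs tlnth[of "i - length Ds1"] by (simp add: nth_append)
      have b: "Ds ! Suc i = Ds2 ! Suc (Suc (i - length Ds1))"
        using 3 Ds_def i lenDs tlnth[of "Suc i - length Ds1"] by (simp add: nth_append Suc_diff_le)
      show ?thesis using a b d2(5) i lenDs 3 by simp
    qed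
  qed
  ultimately show ?thesis unfolding reconf_def by blast
qed

lemma dom_super: "dominating V E D \<Longrightarrow> D \<subseteq> S \<Longrightarrow> S \<subseteq> V \<Longrightarrow> dominating V E S"
  unfolding dominating_def by blast

lemma mono_path_aux:
  assumes "finite F" "\<forall>S. A \<subseteq> S \<and> S \<subseteq> A \<union> F \<longrightarrow> dominating V E S \<and> card S \<le> k"
  shows "reconf V E k A (A \<union> F) \<and> reconf V E k (A \<union> F) A"
  using assms
proof (induction F rule: finite_induct)
  case empty
  then show ?case using reconf_refl by (metis Un_empty_right order_refl)
next
  case (insert x F)
  have h: "\<forall>S. A \<subseteq> S \<and> S \<subseteq> A \<union> F \<longrightarrow> dominating V E S \<and> card S \<le> k"
    using insert.prems by blast
  note IH = insert.IH[OF h]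
  show ?case
  proof (cases "x \<in> A")
    case True
    then have "A \<union> insert x F = A \<union> F" by blast
    then show ?thesis using IH by simp
  next
    case False
    have eq: "A \<union> insert x F = insert x (A \<union> F)" by blast
    have xn: "x \<notin> A \<union> F" using False insert.hyps by blast
    have adj1: "ds_adjacent (A \<union> F) (insert x (A \<union> F))"
    proof -
      have "((A \<union> F) - insert x (A \<union> F)) \<union> (insert x (A \<union> F) - (A \<union> F)) = {x}"
        using xn by blast
      then show ?thesis unfolding ds_adjacent_def by simp
    qed
    have adj2: "ds_adjacent (insert x (A \<union> F)) (A \<union> F)"
      using adj1 unfolding ds_adjacent_def by (simp add: Un_commute)
    have p1: "dominating V E (A \<union> F) \<and> card (A \<union> F) \<le> k"
      using insert.prems[rule_format, of "A \<union> F"] by blast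
    have p2: "dominating V E (insert x (A \<union> F)) \<and> card (insert x (A \<union> F)) \<le> k"
      using insert.prems[rule_format, of "insert x (A \<union> F)"] by blast
    have s1: "reconf V E k (A \<union> F) (insert x (A \<union> F))"
      using reconf_step[OF _ _ _ _ adj1] p1 p2 by blast
    have s2: "reconf V E k (insert x (A \<union> F)) (A \<union> F)"
      using reconf_step[OF _ _ _ _ adj2] p1 p2 by blast
    have "reconf V E k A (insert x (A \<union> F))"
      using reconf_trans[OF conjunct1[OF IH] s1] .
    moreover have "reconf V E k (insert x (A \<union> F)) A"
      using reconf_trans[OF s2 conjunct2[OF IH]] .
    ultimately show ?thesis unfolding eq by blast
  qed
qed

lemma mono_path:
  assumes "A \<subseteq> Y" "Y \<subseteq> V" "finite Y" "dominating V E A" "card Y \<le> k"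
  shows "reconf V E k A Y \<and> reconf V E k Y A"
proof -
  have eqY: "A \<union> (Y - A) = Y" using assms(1) by blast
  have h: "\<forall>S. A \<subseteq> S \<and> S \<subseteq> A \<union> (Y - A) \<longrightarrow> dominating V E S \<and> card S \<le> k"
  proof (intro allI impI)
    fix S assume S: "A \<subseteq> S \<and> S \<subseteq> A \<union> (Y - A)"
    then have SY: "S \<subseteq> Y" using eqY by blast
    have "dominating V E S" using dom_super[OF assms(4)] S SY assms(2) by blast
    moreover have "card S \<le> k" using card_mono[OF assms(3) SY] assms(5) by linarith
    ultimately show "dominating V E S \<and> card S \<le> k" by blast
  qed
  have "finite (Y - A)" using assms(3) by simp
  from mono_path_aux[OF this h] show ?thesis unfolding eqY .
qed

theorem lemma6:
  fixes V1 V2 :: "'a set" and E1 E2 :: "'a set set"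
  assumes "cograph V1 E1" and "cograph V2 E2" and "V1 \<inter> V2 = {}"
  defines "V \<equiv> V1 \<union> V2" and "E \<equiv> join_edges V1 E1 V2 E2"
  shows "(\<forall>w \<in> V. closed_nbhd V E w = V \<longrightarrow>
            min_dominating V E {w} \<and>
            (\<forall>D. dominating V E D \<longrightarrow> reconf V E (card D + 1) D {w}))
       \<and> ((\<nexists>w. w \<in> V \<and> closed_nbhd V E w = V) \<longrightarrow>
            (\<forall>x \<in> V1. \<forall>y \<in> V2.
               min_dominating V E {x, y} \<and>
               (\<forall>D. dominating V E D \<longrightarrow> reconf V E (card D + 1) D {x, y})))"
proof -
  have fin: "finite V" "V \<noteq> {}" using cograph_basic[OF assms(1)] cograph_basic[OF assms(2)]
    unfolding V_def by auto
  have edge: "\<And>v u. v \<in> V1 \<Longrightarrow> u \<in> V2 \<Longrightarrow> {v,u} \<in> E \<and> {u,v} \<in> E"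
    unfolding E_def join_edges_def by (auto simp: insert_commute)
  have domD: "D \<noteq> {} \<and> finite D \<and> D \<subseteq> V" if d: "dominating V E D" for D
  proof -
    have sub: "D \<subseteq> V" using d unfolding dominating_def by blast
    have "finite D" using finite_subset[OF sub fin(1)] .
    moreover have "D \<noteq> {}" using d fin(2) unfolding dominating_def by blast
    ultimately show ?thesis using sub by blast
  qed
  have cardins: "\<And>D z. finite D \<Longrightarrow> card (insert z D) \<le> card D + 1"
    by (simp add: card_insert_if)
  have P1: "\<forall>w \<in> V. closed_nbhd V E w = V \<longrightarrow>
            min_dominating V E {w} \<and>
            (\<forall>D. dominating V E D \<longrightarrow> reconf V E (card D + 1) D {w})"
  proof (intro ballI impI)
    fix w assume w: "w \<in> V" "closed_nbhd V E w = V"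
    have domw: "dominating V E {w}"
      unfolding dominating_def
    proof (intro conjI ballI)
      show "{w} \<subseteq> V" using w by simp
      fix v assume "v \<in> V"
      then have "v \<in> closed_nbhd V E w" using w by simp
      then show "v \<in> {w} \<or> (\<exists>u\<in>{w}. {u, v} \<in> E)"
        unfolding closed_nbhd_def by (auto simp: insert_commute)
    qed
    have "min_dominating V E {w}"
      unfolding min_dominating_def
    proof (intro conjI allI impI)
      show "dominating V E {w}" by (rule domw)
      fix D' assume "dominating V E D'"
      then have "D' \<noteq> {}" "finite D'" using domD by auto
      then have "0 < card D'" by (simp add: card_gt_0_iff)
      then show "card {w} \<le> card D'" by simp
    qed
    moreover have "\<forall>D. dominating V E D \<longrightarrow> reconf V E (card D + 1) D {w}"
    proof (intro allI impI)
      fix D assume D: "dominating V E D"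
      have f: "finite D" "D \<subseteq> V" using domD[OF D] by auto
      have c: "card (insert w D) \<le> card D + 1" using cardins f by simp
      have r1: "reconf V E (card D + 1) D (insert w D)"
        using mono_path[of D "insert w D" V E "card D + 1"] f c D w by auto
      have r2: "reconf V E (card D + 1) (insert w D) {w}"
        using mono_path[of "{w}" "insert w D" V E "card D + 1"] f c domw w by auto
      show "reconf V E (card D + 1) D {w}" using reconf_trans[OF r1 r2] .
    qed
    ultimately show "min_dominating V E {w} \<and>
            (\<forall>D. dominating V E D \<longrightarrow> reconf V E (card D + 1) D {w})" by blast
  qed
  have P2: "(\<nexists>w. w \<in> V \<and> closed_nbhd V E w = V) \<longrightarrow>
            (\<forall>x \<in> V1. \<forall>y \<in> V2.
               min_dominating V E {x, y} \<and>
               (\<forall>D. dominating V E D \<longrightarrow> reconf V E (card D + 1) D {x, y}))"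
  proof (intro impI ballI)
    assume nu: "\<nexists>w. w \<in> V \<and> closed_nbhd V E w = V"
    fix x y assume xy: "x \<in> V1" "y \<in> V2"
    have xny: "x \<noteq> y" using xy assms(3) by auto
    have dom2: "\<And>a b. a \<in> V1 \<Longrightarrow> b \<in> V2 \<Longrightarrow> dominating V E {a,b}"
      unfolding dominating_def V_def using edge by fastforce
    have nsingle: "\<And>u. \<not> dominating V E {u}"
    proof
      fix u assume du: "dominating V E {u}"
      then have uV: "u \<in> V" unfolding dominating_def by simp
      have "closed_nbhd V E u = V"
      proof
        show "closed_nbhd V E u \<subseteq> V" using uV unfolding closed_nbhd_def by auto
        show "V \<subseteq> closed_nbhd V E u"
          using du unfolding closed_nbhd_def dominating_def by (auto simp: insert_commute)
      qed
      then show False using nu uV by blast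
    qed
    have ge2: "\<And>D. dominating V E D \<Longrightarrow> 2 \<le> card D"
    proof (rule ccontr)
      fix D assume D: "dominating V E D" "\<not> 2 \<le> card D"
      then have "card D \<le> 1" by simp
      moreover have "D \<noteq> {}" "finite D" using domD[OF D(1)] by auto
      moreover have "card D \<noteq> 0" using \<open>D \<noteq> {}\<close> \<open>finite D\<close> by simp
      ultimately have "card D = 1" by linarith
      then obtain u where "D = {u}" by (rule card_1_singletonE)
      then show False using nsingle D(1) by simp
    qed
    have "min_dominating V E {x, y}"
      unfolding min_dominating_def using dom2[OF xy] ge2 xny by (simp add: numeral_2_eq_2)
    moreover have "\<forall>D. dominating V E D \<longrightarrow> reconf V E (card D + 1) D {x, y}"
    proof (intro allI impI)
      fix D assume D: "dominating V E D"
      have f: "finite D" "D \<subseteq> V" "D \<noteq> {}" using domD[OF D] by auto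
      have g: "2 \<le> card D" using ge2[OF D] .
      obtain a where a: "a \<in> D" using f by blast
      have aV: "a \<in> V1 \<or> a \<in> V2" using a f unfolding V_def by auto
      have xyV: "x \<in> V" "y \<in> V" using xy unfolding V_def by auto
      have aV': "a \<in> V" using a f by auto
      have c3: "card {a, x, y} \<le> card D + 1"
      proof -
        have "card {a, x, y} \<le> Suc (card {x, y})" by (simp add: card_insert_if)
        also have "\<dots> = 3" using xny by simp
        finally show ?thesis using g by linarith
      qed
      show "reconf V E (card D + 1) D {x, y}"
        using aV
      proof
        assume aV2: "a \<in> V2"
        have c: "card (insert x D) \<le> card D + 1" using cardins f by simp
        have r1: "reconf V E (card D + 1) D (insert x D)"
          using mono_path[of D "insert x D" V E "card D + 1"] f c D xyV by auto
        have r2: "reconf V E (card D + 1) (insert x D) {a, x}"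
          using mono_path[of "{a,x}" "insert x D" V E "card D + 1"] f c dom2[OF xy(1) aV2] a xyV
          by (auto simp: insert_commute)
        have r3: "reconf V E (card D + 1) {a, x} {a, x, y}"
          using mono_path[of "{a,x}" "{a,x,y}" V E "card D + 1"] c3 dom2[OF xy(1) aV2] aV' xyV
          by (auto simp: insert_commute)
        have r4: "reconf V E (card D + 1) {a, x, y} {x, y}"
          using mono_path[of "{x,y}" "{a,x,y}" V E "card D + 1"] c3 dom2[OF xy] aV' xyV
          by auto
        show ?thesis using reconf_trans[OF reconf_trans[OF reconf_trans[OF r1 r2] r3] r4] .
      next
        assume aV1: "a \<in> V1"
        have c: "card (insert y D) \<le> card D + 1" using cardins f by simp
        have r1: "reconf V E (card D + 1) D (insert y D)"
          using mono_path[of D "insert y D" V E "card D + 1"] f c D xyV by auto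
        have r2: "reconf V E (card D + 1) (insert y D) {a, y}"
          using mono_path[of "{a,y}" "insert y D" V E "card D + 1"] f c dom2[OF aV1 xy(2)] a xyV
          by (auto simp: insert_commute)
        have r3: "reconf V E (card D + 1) {a, y} {a, x, y}"
          using mono_path[of "{a,y}" "{a,x,y}" V E "card D + 1"] c3 dom2[OF aV1 xy(2)] aV' xyV
          by (auto simp: insert_commute)
        have r4: "reconf V E (card D + 1) {a, x, y} {x, y}"
          using mono_path[of "{x,y}" "{a,x,y}" V E "card D + 1"] c3 dom2[OF xy] aV' xyV
          by auto
        show ?thesis using reconf_trans[OF reconf_trans[OF reconf_trans[OF r1 r2] r3] r4] .
      qed
    qed
    ultimately show "min_dominating V E {x, y} \<and>
               (\<forall>D. dominating V E D \<longrightarrow> reconf V E (card D + 1) D {x, y})" by blast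
  qed
  show ?thesis using P1 P2 by blast
qed
end
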